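(* Let $X$ be a Tychonoff space with $|X|>2$. Then $\mathrm{girth}(\mathbb{AG}(X))=3$.
   Context: $C(X)$ is the ring of real-valued continuous functions on $X$. $\mathbb{A}(X)$ is the set of nonzero ideals $I$ of $C(X)$ for which there is a nonzero ideal $J$ with $IJ=\{0\}$; $\mathbb{AG}(X)$ has vertex set $\mathbb{A}(X)$, distinct $I,J$ adjacent iff $IJ=\{0\}$. The girth is the minimum length of a cycle in the graph. *)

theory Defs
  imports "HOL-Analysis.Analysis" "HOL-Library.Extended_Nat"
begin

definition tychonoff_space :: "'a topology \<Rightarrow> bool" where
  "tychonoff_space X \<longleftrightarrow> completely_regular_space X \<and> t1_space X"

text \<open>The ring C(X) of real-valued continuous functions on X; functions are
  normalised to be 0 outside the topological space so that equality of
  functions is equality on X.\<close>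
definition CX :: "'a topology \<Rightarrow> ('a \<Rightarrow> real) set" where
  "CX X = {f. continuous_map X euclideanreal f \<and> (\<forall>x. x \<notin> topspace X \<longrightarrow> f x = 0)}"

definition is_ideal_CX :: "'a topology \<Rightarrow> ('a \<Rightarrow> real) set \<Rightarrow> bool" where
  "is_ideal_CX X I \<longleftrightarrow> I \<subseteq> CX X \<and> (\<lambda>x. 0) \<in> I
     \<and> (\<forall>f\<in>I. \<forall>g\<in>I. (\<lambda>x. f x + g x) \<in> I)
     \<and> (\<forall>f\<in>I. \<forall>h\<in>CX X. (\<lambda>x. h x * f x) \<in> I)"

definition ideal_prod :: "('a \<Rightarrow> real) set \<Rightarrow> ('a \<Rightarrow> real) set \<Rightarrow> ('a \<Rightarrow> real) set" where
  "ideal_prod I J = {f. \<exists>(n::nat) a b. (\<forall>i<n. a i \<in> I \<and> b i \<in> J)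
                          \<and> f = (\<lambda>x. \<Sum>i<n. a i x * b i x)}"

definition zero_ideal :: "('a \<Rightarrow> real) set" where
  "zero_ideal = {\<lambda>x. 0}"

definition AX :: "'a topology \<Rightarrow> ('a \<Rightarrow> real) set set" where
  "AX X = {I. is_ideal_CX X I \<and> I \<noteq> zero_ideal \<and>
             (\<exists>J. is_ideal_CX X J \<and> J \<noteq> zero_ideal \<and> ideal_prod I J = zero_ideal)}"

definition AG_adj :: "'a topology \<Rightarrow> ('a \<Rightarrow> real) set \<Rightarrow> ('a \<Rightarrow> real) set \<Rightarrow> bool" where
  "AG_adj X I J \<longleftrightarrow> I \<in> AX X \<and> J \<in> AX X \<and> I \<noteq> J \<and> ideal_prod I J = zero_ideal"

definition is_cycle :: "'v set \<Rightarrow> ('v \<Rightarrow> 'v \<Rightarrow> bool) \<Rightarrow> 'v list \<Rightarrow> bool" where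
  "is_cycle V E vs \<longleftrightarrow> length vs \<ge> 3 \<and> distinct vs \<and> set vs \<subseteq> V
     \<and> (\<forall>i<length vs. E (vs ! i) (vs ! ((i + 1) mod length vs)))"

text \<open>Girth: minimum cycle length (infinity if there is no cycle).\<close>
definition girth :: "'v set \<Rightarrow> ('v \<Rightarrow> 'v \<Rightarrow> bool) \<Rightarrow> enat" where
  "girth V E = (INF vs\<in>{vs. is_cycle V E vs}. enat (length vs))"

end

theory Submission
  imports Defs
begin

definition pid :: "'a topology \<Rightarrow> ('a \<Rightarrow> real) \<Rightarrow> ('a \<Rightarrow> real) set" where
  "pid X f = {g. \<exists>h\<in>CX X. g = (\<lambda>x. h x * f x)}"

lemma CX_one: "(\<lambda>x. if x \<in> topspace X then 1 else 0) \<in> CX X"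
  unfolding CX_def by (auto intro: continuous_map_eq[of X euclideanreal "\<lambda>x. 1"])

lemma CX_mult: "h \<in> CX X \<Longrightarrow> k \<in> CX X \<Longrightarrow> (\<lambda>x. h x * k x) \<in> CX X"
  unfolding CX_def by (auto intro: continuous_map_real_mult)

lemma CX_add: "h \<in> CX X \<Longrightarrow> k \<in> CX X \<Longrightarrow> (\<lambda>x. h x + k x) \<in> CX X"
  unfolding CX_def by (auto intro: continuous_map_add)

lemma CX_zero: "(\<lambda>x. 0) \<in> CX X"
  unfolding CX_def by auto

lemma pid_ideal: assumes "f \<in> CX X" shows "is_ideal_CX X (pid X f)"
  unfolding is_ideal_CX_def
proof (intro conjI ballI)
  show "pid X f \<subseteq> CX X" using assms CX_mult unfolding pid_def by blast
  show "(\<lambda>x. 0) \<in> pid X f" unfolding pid_def using CX_zero by force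
next
  fix g k assume "g \<in> pid X f" "k \<in> pid X f"
  then obtain h1 h2 where "h1 \<in> CX X" "h2 \<in> CX X" "g = (\<lambda>x. h1 x * f x)" "k = (\<lambda>x. h2 x * f x)"
    unfolding pid_def by blast
  then show "(\<lambda>x. g x + k x) \<in> pid X f" unfolding pid_def
    by (intro CollectI bexI[of _ "\<lambda>x. h1 x + h2 x"]) (auto simp: distrib_right CX_add)
next
  fix g k assume "g \<in> pid X f" "k \<in> CX X"
  then obtain h1 where "h1 \<in> CX X" "g = (\<lambda>x. h1 x * f x)"
    unfolding pid_def by blast
  then show "(\<lambda>x. k x * g x) \<in> pid X f" unfolding pid_def
    using \<open>k \<in> CX X\<close>
    by (intro CollectI bexI[of _ "\<lambda>x. k x * h1 x"]) (auto simp: mult.assoc CX_mult)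
qed

lemma f_in_pid: assumes "f \<in> CX X" shows "f \<in> pid X f"
proof -
  have "f = (\<lambda>x. (if x \<in> topspace X then 1 else 0) * f x)"
    using assms unfolding CX_def by auto
  then show ?thesis unfolding pid_def
    by (intro CollectI bexI[of _ "\<lambda>x. if x \<in> topspace X then 1 else 0"] CX_one)
qed

lemma pid_prod:
  assumes "\<forall>x. f x * g x = 0"
  shows "ideal_prod (pid X f) (pid X g) = zero_ideal"
proof -
  have "ideal_prod (pid X f) (pid X g) \<subseteq> zero_ideal"
  proof
    fix k assume "k \<in> ideal_prod (pid X f) (pid X g)"
    then have "\<exists>(n::nat) a b. (\<forall>i<n. a i \<in> pid X f \<and> b i \<in> pid X g)
      \<and> k = (\<lambda>x. \<Sum>i<n. a i x * b i x)" unfolding ideal_prod_def by simp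
    then obtain n :: nat and a b where ab: "\<forall>i<n. a i \<in> pid X f \<and> b i \<in> pid X g"
      and k: "k = (\<lambda>x. \<Sum>i<n. a i x * b i x)" by (elim exE conjE)
    have "\<forall>i<n. \<forall>x. a i x * b i x = 0"
    proof (intro allI impI)
      fix i x assume "i < n"
      then obtain h1 h2 where "a i = (\<lambda>x. h1 x * f x)" "b i = (\<lambda>x. h2 x * g x)"
        using ab unfolding pid_def by blast
      then have "a i x * b i x = (h1 x * h2 x) * (f x * g x)" by (simp add: algebra_simps)
      then show "a i x * b i x = 0" using assms by simp
    qed
    then have "k = (\<lambda>x. 0)" unfolding k by (intro ext sum.neutral) auto
    then show "k \<in> zero_ideal" unfolding zero_ideal_def by simp
  qed
  moreover have "(\<lambda>x. 0) \<in> ideal_prod (pid X f) (pid X g)"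
    unfolding ideal_prod_def by (rule CollectI, rule exI[of _ 0]) auto
  ultimately show ?thesis unfolding zero_ideal_def by auto
qed

lemma pid_nonzero: assumes "f \<in> CX X" "f \<noteq> (\<lambda>x. 0)" shows "pid X f \<noteq> zero_ideal"
  using f_in_pid[OF assms(1)] assms(2) unfolding zero_ideal_def by auto

lemma pid_distinct:
  assumes "f \<in> CX X" "f \<noteq> (\<lambda>x. 0)" "\<forall>x. f x * g x = 0"
  shows "pid X f \<noteq> pid X g"
proof
  assume "pid X f = pid X g"
  then have "f \<in> pid X g" using f_in_pid[OF assms(1)] by simp
  then obtain h where "f = (\<lambda>x. h x * g x)" unfolding pid_def by blast
  then have "\<forall>x. f x * f x = 0" using assms(3)
    by (metis mult.commute mult.left_commute mult_zero_right)
  then have "f = (\<lambda>x. 0)" by (auto simp: fun_eq_iff)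
  then show False using assms(2) by simp
qed

lemma adj:
  assumes "f \<in> CX X" "f \<noteq> (\<lambda>x. 0)" "g \<in> CX X" "g \<noteq> (\<lambda>x. 0)" "\<forall>x. f x * g x = 0"
  shows "AG_adj X (pid X f) (pid X g)"
proof -
  have g': "\<forall>x. g x * f x = 0" using assms(5) by (simp add: mult.commute)
  have "pid X f \<in> AX X" unfolding AX_def
    using pid_ideal[OF assms(1)] pid_nonzero[OF assms(1,2)] pid_ideal[OF assms(3)]
      pid_nonzero[OF assms(3,4)] pid_prod[OF assms(5)] by blast
  moreover have "pid X g \<in> AX X" unfolding AX_def
    using pid_ideal[OF assms(1)] pid_nonzero[OF assms(1,2)] pid_ideal[OF assms(3)]
      pid_nonzero[OF assms(3,4)] pid_prod[OF g'] by blast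
  ultimately show ?thesis unfolding AG_adj_def
    using pid_distinct[OF assms(1,2,5)] pid_prod[OF assms(5)] by blast
qed

lemma bump:
  assumes "completely_regular_space X" "openin X U" "a \<in> U"
  shows "\<exists>f\<in>CX X. f a \<noteq> 0 \<and> (\<forall>x. x \<notin> U \<longrightarrow> f x = 0)"
proof -
  have cl: "closedin X (topspace X - U)" using assms(2) by auto
  have mem: "a \<in> topspace X - (topspace X - U)" using assms(2,3) openin_subset by auto
  obtain g :: "'a \<Rightarrow> real" where g: "continuous_map X (top_of_set {0..1}) g" "g a = 0"
    "g ` (topspace X - U) \<subseteq> {1}"
    using assms(1)[unfolded completely_regular_space_def, rule_format, OF conjI[OF cl mem]]
    by blast
  have gc: "continuous_map X euclideanreal g" using g(1) continuous_map_in_subtopology by blast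
  define f where "f = (\<lambda>x. if x \<in> topspace X then 1 - g x else 0)"
  have "continuous_map X euclideanreal f"
    by (rule continuous_map_eq[of X euclideanreal "\<lambda>x. 1 - g x"])
       (auto simp: f_def intro: continuous_map_diff gc)
  then have "f \<in> CX X" unfolding CX_def f_def by auto
  moreover have "f a \<noteq> 0" using g(2) assms openin_subset unfolding f_def by auto
  moreover have "\<forall>x. x \<notin> U \<longrightarrow> f x = 0" using g(3) unfolding f_def by auto
  ultimately show ?thesis by blast
qed

theorem mainTheorem14:
  fixes X :: "'a topology"
  assumes "tychonoff_space X"
    and "\<exists>a b c. a \<in> topspace X \<and> b \<in> topspace X \<and> c \<in> topspace X
                 \<and> a \<noteq> b \<and> a \<noteq> c \<and> b \<noteq> c"
  shows "girth (AX X) (AG_adj X) = 3"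
proof -
  obtain a b c where abc: "a \<in> topspace X" "b \<in> topspace X" "c \<in> topspace X"
    "a \<noteq> b" "a \<noteq> c" "b \<noteq> c" using assms(2) by blast
  have cr: "completely_regular_space X" and t1: "t1_space X"
    using assms(1) unfolding tychonoff_space_def by auto
  have H: "Hausdorff_space X"
    using regular_t1_imp_Hausdorff_space[OF completely_regular_imp_regular_space[OF cr] t1] .
  obtain U1 V1 where 1: "openin X U1" "openin X V1" "a \<in> U1" "b \<in> V1" "disjnt U1 V1"
    using H[unfolded Hausdorff_space_def, rule_format, of a b] abc by blast
  obtain U2 W2 where 2: "openin X U2" "openin X W2" "a \<in> U2" "c \<in> W2" "disjnt U2 W2"
    using H[unfolded Hausdorff_space_def, rule_format, of a c] abc by blast
  obtain V3 W3 where 3: "openin X V3" "openin X W3" "b \<in> V3" "c \<in> W3" "disjnt V3 W3"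
    using H[unfolded Hausdorff_space_def, rule_format, of b c] abc by blast
  obtain f where f: "f \<in> CX X" "f a \<noteq> 0" "\<forall>x. x \<notin> U1 \<inter> U2 \<longrightarrow> f x = 0"
    using bump[OF cr, of "U1 \<inter> U2" a] 1 2 by auto
  obtain g where g: "g \<in> CX X" "g b \<noteq> 0" "\<forall>x. x \<notin> V1 \<inter> V3 \<longrightarrow> g x = 0"
    using bump[OF cr, of "V1 \<inter> V3" b] 1 3 by auto
  obtain k where k: "k \<in> CX X" "k c \<noteq> 0" "\<forall>x. x \<notin> W2 \<inter> W3 \<longrightarrow> k x = 0"
    using bump[OF cr, of "W2 \<inter> W3" c] 2 3 by auto
  have fg: "\<forall>x. f x * g x = 0" using f(3) g(3) 1(5) unfolding disjnt_def by auto
  have fk: "\<forall>x. f x * k x = 0" using f(3) k(3) 2(5) unfolding disjnt_def by auto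
  have gk: "\<forall>x. g x * k x = 0" using g(3) k(3) 3(5) unfolding disjnt_def by auto
  have gf: "\<forall>x. g x * f x = 0" "\<forall>x. k x * f x = 0" "\<forall>x. k x * g x = 0"
    using fg fk gk by (auto simp: mult.commute)
  have nz: "f \<noteq> (\<lambda>x. 0)" "g \<noteq> (\<lambda>x. 0)" "k \<noteq> (\<lambda>x. 0)" using f(2) g(2) k(2) by auto
  have A1: "AG_adj X (pid X f) (pid X g)" using adj f(1) g(1) nz fg by blast
  have A2: "AG_adj X (pid X g) (pid X k)" using adj k(1) g(1) nz gk by blast
  have A3: "AG_adj X (pid X k) (pid X f)" using adj k(1) f(1) nz gf by blast
  let ?vs = "[pid X f, pid X g, pid X k]"
  have cyc: "is_cycle (AX X) (AG_adj X) ?vs"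
    unfolding is_cycle_def
  proof (intro conjI)
    have "pid X f \<noteq> pid X g" by (rule pid_distinct[OF f(1) nz(1) fg])
    moreover have "pid X f \<noteq> pid X k" by (rule pid_distinct[OF f(1) nz(1) fk])
    moreover have "pid X g \<noteq> pid X k" by (rule pid_distinct[OF g(1) nz(2) gk])
    ultimately show "distinct ?vs" by simp
    show "set ?vs \<subseteq> AX X" using A1 A2 A3 unfolding AG_adj_def by auto
    show "\<forall>i<length ?vs. AG_adj X (?vs ! i) (?vs ! ((i + 1) mod length ?vs))"
    proof (intro allI impI)
      fix i assume "i < length ?vs"
      then have "i = 0 \<or> i = 1 \<or> i = 2" by auto
      then show "AG_adj X (?vs ! i) (?vs ! ((i + 1) mod length ?vs))"
        using A1 A2 A3 by auto
    qed
  qed simp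
  have "girth (AX X) (AG_adj X) \<le> enat (length ?vs)"
    unfolding girth_def using cyc by (intro INF_lower) simp
  then have le: "girth (AX X) (AG_adj X) \<le> 3" by (simp add: numeral_eq_enat numeral_3_eq_3)
  have ge: "3 \<le> girth (AX X) (AG_adj X)"
    unfolding girth_def is_cycle_def
    by (rule INF_greatest) (auto simp: numeral_eq_enat)
  show ?thesis using le ge by simp
qed

end
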